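(* Let $k$ be an algebraically closed field of characteristic zero and $0<l<n$. Let $Y,Z\subset\mathbb P^n$ be closed subvarieties with saturated homogeneous ideals $I_Y,I_Z\subset k[x_0,\dots,x_n]$, $I_X=I_Y\cap I_Z$, with $Y\subset\{x_0=\cdots=x_{l-1}=0\}$, $Z\subset\{x_{l+1}=\cdots=x_n=0\}$ and $Y\cap Z\neq\emptyset$ (so $Y\cap Z=\{p\}$, $p$ the coordinate point of $x_l$). Fix a monomial order $\prec$ and a positive integer $m$, and let $\Sigma_{X,m}$ be the set of degree-$m$ monomials of $k[x_0,\dots,x_n]$ not in $\mathrm{in}_\prec(I_X)$, $\Sigma_{Y,m}$ the set of degree-$m$ monomials of $k[x_l,\dots,x_n]$ not in $\mathrm{in}_\prec(I_Y\cap k[x_l,\dots,x_n])$, and $\Sigma_{Z,m}$ the set of degree-$m$ monomials of $k[x_0,\dots,x_l]$ not in $\mathrm{in}_\prec(I_Z\cap k[x_0,\dots,x_l])$ (initial ideals of the intersections computed in the respective subrings). Then $\Sigma_{X,m}=\Sigma_{Y,m}\cup\Sigma_{Z,m}$ and $\Sigma_{Y,m}\cap\Sigma_{Z,m}=\{x_l^m\}$. *)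

theory Defs
  imports "HOL-Library.Poly_Mapping" "HOL-Computational_Algebra.Polynomial"
begin

text \<open>Monomials in variables x_0, x_1, ... are finitely supported exponent vectors
  nat =>0 nat; polynomials with coefficients in k are ((nat =>0 nat) =>0 k),
  with the convolution product from Poly_Mapping.\<close>

type_synonym mono = "nat \<Rightarrow>\<^sub>0 nat"
type_synonym 'k mpoly = "mono \<Rightarrow>\<^sub>0 'k"

definition mdeg :: "mono \<Rightarrow> nat" where
  "mdeg a = (\<Sum>i\<in>Poly_Mapping.keys a. Poly_Mapping.lookup a i)"

definition polyring :: "nat set \<Rightarrow> ('k::zero) mpoly set" where
  "polyring V = {f. \<forall>a\<in>Poly_Mapping.keys f. Poly_Mapping.keys a \<subseteq> V}"

definition homogeneous :: "('k::zero) mpoly \<Rightarrow> bool" where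
  "homogeneous f \<longleftrightarrow> (\<exists>d. \<forall>a\<in>Poly_Mapping.keys f. mdeg a = d)"

definition mpoly_eval :: "('k::comm_ring_1) mpoly \<Rightarrow> (nat \<Rightarrow> 'k) \<Rightarrow> 'k" where
  "mpoly_eval f v = (\<Sum>a\<in>Poly_Mapping.keys f. Poly_Mapping.lookup f a * (\<Prod>i\<in>Poly_Mapping.keys a. v i ^ Poly_Mapping.lookup a i))"

text \<open>Points of P^n are represented by their affine cones: nonzero vectors
  v with v i = 0 for i > n.\<close>
definition cone_points :: "nat \<Rightarrow> (nat \<Rightarrow> 'k::zero) set" where
  "cone_points n = {v. (\<forall>i>n. v i = 0) \<and> (\<exists>i\<le>n. v i \<noteq> 0)}"

definition proj_closed :: "nat \<Rightarrow> (nat \<Rightarrow> 'k::comm_ring_1) set \<Rightarrow> bool" where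
  "proj_closed n Y \<longleftrightarrow> (\<exists>S. S \<subseteq> polyring {0..n} \<and> (\<forall>g\<in>S. homogeneous g) \<and>
      Y = {v\<in>cone_points n. \<forall>g\<in>S. mpoly_eval g v = 0})"

text \<open>The (saturated, homogeneous) ideal of Y in k[x_0..x_n].\<close>
definition van_ideal :: "nat \<Rightarrow> (nat \<Rightarrow> 'k::comm_ring_1) set \<Rightarrow> 'k mpoly set" where
  "van_ideal n Y = {f\<in>polyring {0..n}. \<forall>v\<in>Y. mpoly_eval f v = 0}"

definition monomial_order :: "nat \<Rightarrow> (mono \<Rightarrow> mono \<Rightarrow> bool) \<Rightarrow> bool" where
  "monomial_order n ord \<longleftrightarrow>
    (let M = {a::mono. Poly_Mapping.keys a \<subseteq> {0..n}} in
      (\<forall>a\<in>M. ord a a) \<and>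
      (\<forall>a\<in>M. \<forall>b\<in>M. ord a b \<and> ord b a \<longrightarrow> a = b) \<and>
      (\<forall>a\<in>M. \<forall>b\<in>M. \<forall>c\<in>M. ord a b \<and> ord b c \<longrightarrow> ord a c) \<and>
      (\<forall>a\<in>M. \<forall>b\<in>M. ord a b \<or> ord b a) \<and>
      (\<forall>a\<in>M. ord 0 a) \<and>
      (\<forall>a\<in>M. \<forall>b\<in>M. \<forall>c\<in>M. ord a b \<longrightarrow> ord (a + c) (b + c)))"

definition lead_mono :: "(mono \<Rightarrow> mono \<Rightarrow> bool) \<Rightarrow> ('k::zero) mpoly \<Rightarrow> mono" where
  "lead_mono ord f = (THE a. a \<in> Poly_Mapping.keys f \<and> (\<forall>b\<in>Poly_Mapping.keys f. ord b a))"

definition gen_ideal :: "('k::comm_ring_1) mpoly set \<Rightarrow> 'k mpoly set \<Rightarrow> 'k mpoly set" where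
  "gen_ideal R G = {f. \<exists>G' c. finite G' \<and> G' \<subseteq> G \<and> (\<forall>g\<in>G'. c g \<in> R) \<and>
                          f = (\<Sum>g\<in>G'. c g * g)}"

definition init_ideal :: "(mono \<Rightarrow> mono \<Rightarrow> bool) \<Rightarrow> ('k::comm_ring_1) mpoly set \<Rightarrow> 'k mpoly set \<Rightarrow> 'k mpoly set" where
  "init_ideal ord R I = gen_ideal R {Poly_Mapping.single (lead_mono ord f) 1 | f. f \<in> I \<and> f \<noteq> 0}"

definition std_monos :: "(mono \<Rightarrow> mono \<Rightarrow> bool) \<Rightarrow> nat set \<Rightarrow> ('k::comm_ring_1) mpoly set \<Rightarrow> nat \<Rightarrow> mono set" where
  "std_monos ord V I m = {a. Poly_Mapping.keys a \<subseteq> V \<and> mdeg a = m \<and>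
      (Poly_Mapping.single a (1::'k)) \<notin> init_ideal ord (polyring V) (I \<inter> polyring V)}"

end

theory Submission imports Defs begin

lemma keys_add_nat: "Poly_Mapping.keys (a + b :: mono) = Poly_Mapping.keys a \<union> Poly_Mapping.keys b"
  by (auto simp: in_keys_iff lookup_add)

lemma mono_single_l:
  assumes "Poly_Mapping.keys (a::mono) \<subseteq> {l}" shows "a = Poly_Mapping.single l (Poly_Mapping.lookup a l)"
proof (rule poly_mapping_eqI)
  fix i show "Poly_Mapping.lookup a i = Poly_Mapping.lookup (Poly_Mapping.single l (Poly_Mapping.lookup a l)) i"
    using assms by (cases "i = l") (auto simp: lookup_single_not_eq in_keys_iff)
qed

lemma prod_keys_single:
  assumes "Poly_Mapping.keys (a::mono) \<subseteq> {l}"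
  shows "(\<Prod>i\<in>Poly_Mapping.keys a. (w i::'k::comm_monoid_mult) ^ Poly_Mapping.lookup a i) = w l ^ Poly_Mapping.lookup a l"
proof (cases "Poly_Mapping.keys a = {}")
  case True then have "Poly_Mapping.lookup a l = 0" by (auto simp: in_keys_iff)
  then show ?thesis using True by simp
next
  case False then have "Poly_Mapping.keys a = {l}" using assms by blast
  then show ?thesis by simp
qed

lemma mdeg_keys_single:
  assumes "Poly_Mapping.keys (a::mono) \<subseteq> {l}" shows "mdeg a = Poly_Mapping.lookup a l"
proof (cases "Poly_Mapping.keys a = {}")
  case True then have "Poly_Mapping.lookup a l = 0" by (auto simp: in_keys_iff)
  then show ?thesis using True by (simp add: mdeg_def)
next
  case False then have "Poly_Mapping.keys a = {l}" using assms by blast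
  then show ?thesis by (simp add: mdeg_def)
qed

lemma eval_zero:
  assumes "\<forall>a\<in>Poly_Mapping.keys f. \<exists>i\<in>Poly_Mapping.keys a. v i = 0"
  shows "mpoly_eval (f::'k::comm_ring_1 mpoly) v = 0"
  unfolding mpoly_eval_def
proof (rule sum.neutral, rule ballI)
  fix a assume "a \<in> Poly_Mapping.keys f"
  then obtain i where i: "i \<in> Poly_Mapping.keys a" "v i = 0" using assms by blast
  then have "v i ^ Poly_Mapping.lookup a i = 0" by (simp add: in_keys_iff power_0_left)
  then have "(\<Prod>i\<in>Poly_Mapping.keys a. v i ^ Poly_Mapping.lookup a i) = 0"
    using i(1) by (intro prod_zero) auto
  then show "Poly_Mapping.lookup f a * (\<Prod>i\<in>Poly_Mapping.keys a. v i ^ Poly_Mapping.lookup a i) = 0" by simp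
qed

definition restr :: "nat set \<Rightarrow> ('k::zero) mpoly \<Rightarrow> 'k mpoly" where
  "restr V f = Abs_poly_mapping (\<lambda>a. if Poly_Mapping.keys a \<subseteq> V then Poly_Mapping.lookup f a else 0)"

lemma lookup_restr: "Poly_Mapping.lookup (restr V f) a = (if Poly_Mapping.keys a \<subseteq> V then Poly_Mapping.lookup f a else 0)"
proof -
  have "finite {a. (if Poly_Mapping.keys a \<subseteq> V then Poly_Mapping.lookup f a else 0) \<noteq> 0}"
    by (rule finite_subset[of _ "Poly_Mapping.keys f"]) (auto simp: in_keys_iff split: if_splits)
  then show ?thesis unfolding restr_def by simp
qed

lemma keys_restr: "Poly_Mapping.keys (restr V f) = {a\<in>Poly_Mapping.keys f. Poly_Mapping.keys a \<subseteq> V}"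
proof (rule set_eqI)
  fix a show "a \<in> Poly_Mapping.keys (restr V f) \<longleftrightarrow> a \<in> {a\<in>Poly_Mapping.keys f. Poly_Mapping.keys a \<subseteq> V}"
    unfolding mem_Collect_eq in_keys_iff[of a "restr V f"] in_keys_iff[of a f] lookup_restr by auto
qed

lemma eval_restr:
  assumes "\<forall>a\<in>Poly_Mapping.keys f. \<not> Poly_Mapping.keys a \<subseteq> V \<longrightarrow> (\<exists>i\<in>Poly_Mapping.keys a. v i = 0)"
  shows "mpoly_eval (f::'k::comm_ring_1 mpoly) v = mpoly_eval (restr V f) v"
proof -
  let ?h = "\<lambda>a. Poly_Mapping.lookup f a * (\<Prod>i\<in>Poly_Mapping.keys a. v i ^ Poly_Mapping.lookup a i)"
  have "mpoly_eval f v = sum ?h (Poly_Mapping.keys f)" by (simp add: mpoly_eval_def)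
  also have "\<dots> = sum ?h (Poly_Mapping.keys (restr V f))"
  proof (rule sum.mono_neutral_right)
    show "\<forall>a\<in>Poly_Mapping.keys f - Poly_Mapping.keys (restr V f). ?h a = 0"
    proof
      fix a assume a: "a \<in> Poly_Mapping.keys f - Poly_Mapping.keys (restr V f)"
      then obtain i where i: "i \<in> Poly_Mapping.keys a" "v i = 0" using assms by (auto simp: keys_restr)
      then have "v i ^ Poly_Mapping.lookup a i = 0" by (simp add: in_keys_iff power_0_left)
      then have "(\<Prod>i\<in>Poly_Mapping.keys a. v i ^ Poly_Mapping.lookup a i) = 0"
        using i(1) by (intro prod_zero) auto
      then show "?h a = 0" by simp
    qed
  qed (auto simp: keys_restr)
  also have "\<dots> = mpoly_eval (restr V f) v"
    unfolding mpoly_eval_def by (rule sum.cong) (auto simp: keys_restr lookup_restr)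
  finally show ?thesis .
qed

lemma eval_homog:
  assumes "\<forall>a\<in>Poly_Mapping.keys g. mdeg a = d"
  shows "mpoly_eval (g::'k::comm_ring_1 mpoly) (\<lambda>i. t * w i) = t ^ d * mpoly_eval g w"
  unfolding mpoly_eval_def sum_distrib_left
proof (rule sum.cong[OF refl])
  fix a assume a: "a \<in> Poly_Mapping.keys g"
  have "(\<Prod>i\<in>Poly_Mapping.keys a. (t * w i) ^ Poly_Mapping.lookup a i)
      = (\<Prod>i\<in>Poly_Mapping.keys a. t ^ Poly_Mapping.lookup a i) * (\<Prod>i\<in>Poly_Mapping.keys a. w i ^ Poly_Mapping.lookup a i)"
    by (simp add: power_mult_distrib prod.distrib)
  also have "(\<Prod>i\<in>Poly_Mapping.keys a. t ^ Poly_Mapping.lookup a i) = t ^ d"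
    using assms a by (simp add: power_sum[symmetric] mdeg_def)
  finally show "Poly_Mapping.lookup g a * (\<Prod>i\<in>Poly_Mapping.keys a. (t * w i) ^ Poly_Mapping.lookup a i) =
         t ^ d * (Poly_Mapping.lookup g a * (\<Prod>i\<in>Poly_Mapping.keys a. w i ^ Poly_Mapping.lookup a i))"
    by (simp add: ac_simps)
qed


lemma mo_props:
  assumes "monomial_order n ord"
  shows "\<And>a. a \<in> {a::mono. Poly_Mapping.keys a \<subseteq> {0..n}} \<Longrightarrow> ord a a"
    and "\<And>a b. a \<in> {a::mono. Poly_Mapping.keys a \<subseteq> {0..n}} \<Longrightarrow> b \<in> {a::mono. Poly_Mapping.keys a \<subseteq> {0..n}} \<Longrightarrow> ord a b \<Longrightarrow> ord b a \<Longrightarrow> a = b"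
    and "\<And>a b c. a \<in> {a::mono. Poly_Mapping.keys a \<subseteq> {0..n}} \<Longrightarrow> b \<in> {a::mono. Poly_Mapping.keys a \<subseteq> {0..n}} \<Longrightarrow> c \<in> {a::mono. Poly_Mapping.keys a \<subseteq> {0..n}} \<Longrightarrow> ord a b \<Longrightarrow> ord b c \<Longrightarrow> ord a c"
    and "\<And>a b. a \<in> {a::mono. Poly_Mapping.keys a \<subseteq> {0..n}} \<Longrightarrow> b \<in> {a::mono. Poly_Mapping.keys a \<subseteq> {0..n}} \<Longrightarrow> ord a b \<or> ord b a"
proof -
  define M where "M = {a::mono. Poly_Mapping.keys a \<subseteq> {0..n}}"
  have H: "(\<forall>a\<in>M. ord a a) \<and>
      (\<forall>a\<in>M. \<forall>b\<in>M. ord a b \<and> ord b a \<longrightarrow> a = b) \<and>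
      (\<forall>a\<in>M. \<forall>b\<in>M. \<forall>c\<in>M. ord a b \<and> ord b c \<longrightarrow> ord a c) \<and>
      (\<forall>a\<in>M. \<forall>b\<in>M. ord a b \<or> ord b a)"
    using assms(1) unfolding monomial_order_def Let_def M_def[symmetric] by (elim conjE) (intro conjI)
  then have H1: "\<forall>a\<in>M. ord a a" and H2: "\<forall>a\<in>M. \<forall>b\<in>M. ord a b \<and> ord b a \<longrightarrow> a = b"
    and H3: "\<forall>a\<in>M. \<forall>b\<in>M. \<forall>c\<in>M. ord a b \<and> ord b c \<longrightarrow> ord a c"
    and H4: "\<forall>a\<in>M. \<forall>b\<in>M. ord a b \<or> ord b a" by blast+
  show "\<And>a. a \<in> {a::mono. Poly_Mapping.keys a \<subseteq> {0..n}} \<Longrightarrow> ord a a" using H1 unfolding M_def by blast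
  show "\<And>a b. a \<in> {a::mono. Poly_Mapping.keys a \<subseteq> {0..n}} \<Longrightarrow> b \<in> {a::mono. Poly_Mapping.keys a \<subseteq> {0..n}} \<Longrightarrow> ord a b \<Longrightarrow> ord b a \<Longrightarrow> a = b"
    using H2 unfolding M_def by blast
  show "\<And>a b c. a \<in> {a::mono. Poly_Mapping.keys a \<subseteq> {0..n}} \<Longrightarrow> b \<in> {a::mono. Poly_Mapping.keys a \<subseteq> {0..n}} \<Longrightarrow> c \<in> {a::mono. Poly_Mapping.keys a \<subseteq> {0..n}} \<Longrightarrow> ord a b \<Longrightarrow> ord b c \<Longrightarrow> ord a c"
    using H3 unfolding M_def by blast
  show "\<And>a b. a \<in> {a::mono. Poly_Mapping.keys a \<subseteq> {0..n}} \<Longrightarrow> b \<in> {a::mono. Poly_Mapping.keys a \<subseteq> {0..n}} \<Longrightarrow> ord a b \<or> ord b a"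
    using H4 unfolding M_def by blast
qed

lemma exists_max:
  assumes "monomial_order n ord" "finite S" "S \<noteq> {}" "S \<subseteq> {a::mono. Poly_Mapping.keys a \<subseteq> {0..n}}"
  shows "\<exists>a\<in>S. \<forall>b\<in>S. ord b a"
  using assms(2,3,4)
proof (induction S rule: finite_ne_induct)
  case (singleton x) then show ?case using mo_props(1)[OF assms(1)] by auto
next
  case (insert x F)
  then obtain a where a: "a \<in> F" "\<forall>b\<in>F. ord b a" by auto
  have xM: "x \<in> {a::mono. Poly_Mapping.keys a \<subseteq> {0..n}}" and aM: "a \<in> {a::mono. Poly_Mapping.keys a \<subseteq> {0..n}}"
    using insert a by auto
  show ?case
  proof (cases "ord x a")
    case True then show ?thesis using a mo_props(1)[OF assms(1) xM] by auto
  next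
    case False
    then have xa: "ord a x" using mo_props(4)[OF assms(1) xM aM] by auto
    have "\<forall>b\<in>insert x F. ord b x"
    proof
      fix b assume "b \<in> insert x F"
      then show "ord b x"
      proof
        assume "b = x" then show ?thesis using mo_props(1)[OF assms(1) xM] by simp
      next
        assume bF: "b \<in> F"
        then have bM: "b \<in> {a::mono. Poly_Mapping.keys a \<subseteq> {0..n}}" using insert by auto
        show ?thesis using mo_props(3)[OF assms(1) bM aM xM] a(2) bF xa by auto
      qed
    qed
    then show ?thesis by auto
  qed
qed

lemma lead_eqI:
  assumes "monomial_order n ord" "f \<in> polyring {0..n}" "a \<in> Poly_Mapping.keys f" "\<forall>b\<in>Poly_Mapping.keys f. ord b a"
  shows "lead_mono ord f = a"
  unfolding lead_mono_def
proof (rule the_equality)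
  show "a \<in> Poly_Mapping.keys f \<and> (\<forall>b\<in>Poly_Mapping.keys f. ord b a)" using assms by auto
next
  fix b assume b: "b \<in> Poly_Mapping.keys f \<and> (\<forall>c\<in>Poly_Mapping.keys f. ord c b)"
  have "a \<in> {a::mono. Poly_Mapping.keys a \<subseteq> {0..n}}" "b \<in> {a::mono. Poly_Mapping.keys a \<subseteq> {0..n}}"
    using assms(2,3) b unfolding polyring_def by auto
  then show "b = a" using mo_props(2)[OF assms(1)] b assms(3,4) by blast
qed

lemma lead_props:
  assumes "monomial_order n ord" "f \<in> polyring {0..n}" "f \<noteq> 0"
  shows "lead_mono ord f \<in> Poly_Mapping.keys f \<and> (\<forall>b\<in>Poly_Mapping.keys f. ord b (lead_mono ord f))"
proof -
  obtain a where a: "a \<in> Poly_Mapping.keys f" "\<forall>b\<in>Poly_Mapping.keys f. ord b a"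
    using exists_max[OF assms(1), of "Poly_Mapping.keys f"] assms(2,3) unfolding polyring_def by auto
  then show ?thesis using lead_eqI[OF assms(1,2) a] by simp
qed

lemma gen_mono_iff:
  assumes "Poly_Mapping.keys a \<subseteq> V"
  shows "Poly_Mapping.single a (1::'k::comm_ring_1) \<in> gen_ideal (polyring V) {Poly_Mapping.single (h f) 1 | f. P f}
     \<longleftrightarrow> (\<exists>f. P f \<and> (\<exists>c. a = h f + c))"
proof
  assume "Poly_Mapping.single a (1::'k) \<in> gen_ideal (polyring V) {Poly_Mapping.single (h f) 1 | f. P f}"
  then have "\<exists>G' c. finite G' \<and> G' \<subseteq> {Poly_Mapping.single (h f) 1 | f. P f} \<and> (\<forall>g\<in>G'. c g \<in> polyring V) \<and>
                          Poly_Mapping.single a (1::'k) = (\<Sum>g\<in>G'. c g * g)"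
    unfolding gen_ideal_def by (rule CollectD)
  then obtain G' c where G': "G' \<subseteq> {Poly_Mapping.single (h f) 1 | f. P f}"
    and eq: "Poly_Mapping.single a (1::'k) = (\<Sum>g\<in>G'. c g * g)"
    by (elim exE conjE)
  have "Poly_Mapping.lookup (\<Sum>g\<in>G'. c g * g) a \<noteq> 0" unfolding eq[symmetric] by simp
  then have "(\<Sum>g\<in>G'. Poly_Mapping.lookup (c g * g) a) \<noteq> 0" by (simp add: lookup_sum)
  then obtain g where g: "g \<in> G'" "Poly_Mapping.lookup (c g * g) a \<noteq> 0"
    by (meson sum.not_neutral_contains_not_neutral)
  from G' g(1) have "g \<in> {Poly_Mapping.single (h f) 1 | f. P f}" by (rule subsetD)
  then obtain f where f: "P f" "g = Poly_Mapping.single (h f) 1" by blast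
  have "a \<in> Poly_Mapping.keys (c g * g)" using g(2) by (simp add: in_keys_iff)
  then have "a \<in> {x + y | x y. x \<in> Poly_Mapping.keys (c g) \<and> y \<in> Poly_Mapping.keys g}"
    using keys_mult[of "c g" g] by (rule subsetD[rotated])
  then obtain x where "a = x + h f" using f(2) by auto
  then show "\<exists>f. P f \<and> (\<exists>c. a = h f + c)" using f(1) by (metis add.commute)
next
  assume "\<exists>f. P f \<and> (\<exists>c. a = h f + c)"
  then obtain f c where f: "P f" "a = h f + c" by blast
  have "Poly_Mapping.keys c \<subseteq> V" using assms f(2) keys_add_nat by auto
  then have cR: "Poly_Mapping.single c (1::'k) \<in> polyring V" unfolding polyring_def by simp
  have eq: "Poly_Mapping.single a (1::'k) = (\<Sum>g\<in>{Poly_Mapping.single (h f) 1}. (\<lambda>_. Poly_Mapping.single c 1) g * g)"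
    using f(2) by (simp add: mult_single add.commute)
  have sub: "{Poly_Mapping.single (h f) (1::'k)} \<subseteq> {Poly_Mapping.single (h f) 1 | f. P f}" using f(1) by blast
  show "Poly_Mapping.single a (1::'k) \<in> gen_ideal (polyring V) {Poly_Mapping.single (h f) 1 | f. P f}"
    unfolding gen_ideal_def
    apply (rule CollectI)
    apply (rule exI[of _ "{Poly_Mapping.single (h f) (1::'k)}"])
    apply (rule exI[of _ "\<lambda>_. Poly_Mapping.single c 1"])
    using sub cR eq by simp
qed

lemma std_iff:
  "a \<in> std_monos ord V (I::'k::comm_ring_1 mpoly set) m \<longleftrightarrow> Poly_Mapping.keys a \<subseteq> V \<and> mdeg a = m \<and>
     \<not> (\<exists>f. (f \<in> I \<inter> polyring V \<and> f \<noteq> 0) \<and> (\<exists>c. a = lead_mono ord f + c))"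
proof -
  have "Poly_Mapping.keys a \<subseteq> V \<Longrightarrow> Poly_Mapping.single a (1::'k) \<in> init_ideal ord (polyring V) (I \<inter> polyring V)
     \<longleftrightarrow> (\<exists>f. (f \<in> I \<inter> polyring V \<and> f \<noteq> 0) \<and> (\<exists>c. a = lead_mono ord f + c))"
    unfolding init_ideal_def by (rule gen_mono_iff)
  then show ?thesis unfolding std_monos_def by auto
qed


lemma scale_in:
  assumes "proj_closed n W" "v \<in> W" "(t::'k::field) \<noteq> 0"
  shows "(\<lambda>i. t * v i) \<in> W"
proof -
  obtain S where S: "S \<subseteq> polyring {0..n}" "\<forall>g\<in>S. homogeneous g"
    "W = {v\<in>cone_points n. \<forall>g\<in>S. mpoly_eval g v = 0}"
    using assms(1) unfolding proj_closed_def by blast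
  have v: "v \<in> cone_points n" "\<forall>g\<in>S. mpoly_eval g v = 0" using assms(2) S(3) by auto
  have "(\<lambda>i. t * v i) \<in> cone_points n" using v(1) assms(3) unfolding cone_points_def by auto
  moreover have "\<forall>g\<in>S. mpoly_eval g (\<lambda>i. t * v i) = 0"
  proof
    fix g assume g: "g \<in> S"
    then obtain d where "\<forall>a\<in>Poly_Mapping.keys g. mdeg a = d" using S(2) unfolding homogeneous_def by blast
    then have "mpoly_eval g (\<lambda>i. t * v i) = t ^ d * mpoly_eval g v" by (rule eval_homog)
    then show "mpoly_eval g (\<lambda>i. t * v i) = 0" using v(2) g by simp
  qed
  ultimately show ?thesis using S(3) by simp
qed

lemma Kpoint:
  assumes "proj_closed n W" "v \<in> W" "\<forall>i. i \<noteq> l \<longrightarrow> v i = 0"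
    and "f \<in> van_ideal n W"
  shows "Poly_Mapping.lookup f (Poly_Mapping.single l d) = (0::'k::field_char_0)"
proof -
  obtain S where S: "W = {v\<in>cone_points n. \<forall>g\<in>S. mpoly_eval g v = 0}"
    using assms(1) unfolding proj_closed_def by blast
  have "v \<in> cone_points n" using assms(2) S by auto
  then have vl: "v l \<noteq> 0" using assms(3) unfolding cone_points_def by auto
  define A where "A = {a\<in>Poly_Mapping.keys f. Poly_Mapping.keys a \<subseteq> {l}}"
  define P where "P = (\<Sum>a\<in>A. monom (Poly_Mapping.lookup f a) (Poly_Mapping.lookup a l))"
  have finA: "finite A" unfolding A_def by simp
  have root: "poly P x = 0" if x: "x \<noteq> 0" for x
  proof -
    define t where "t = x / v l"
    have t: "t \<noteq> 0" "t * v l = x" using x vl unfolding t_def by auto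
    have "(\<lambda>i. t * v i) \<in> W" using scale_in[OF assms(1,2) t(1)] .
    then have "mpoly_eval f (\<lambda>i. t * v i) = 0" using assms(4) unfolding van_ideal_def by auto
    moreover have "mpoly_eval f (\<lambda>i. t * v i) = mpoly_eval (restr {l} f) (\<lambda>i. t * v i)"
    proof (rule eval_restr, intro ballI impI)
      fix a assume "\<not> Poly_Mapping.keys a \<subseteq> {l}"
      then obtain i where "i \<in> Poly_Mapping.keys a" "i \<noteq> l" by auto
      then show "\<exists>i\<in>Poly_Mapping.keys a. t * v i = 0" using assms(3) by auto
    qed
    moreover have "mpoly_eval (restr {l} f) (\<lambda>i. t * v i) = poly P x"
      unfolding mpoly_eval_def P_def poly_sum poly_monom keys_restr A_def[symmetric]
    proof (rule sum.cong[OF refl])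
      fix a assume a: "a \<in> A"
      then have "Poly_Mapping.keys a \<subseteq> {l}" unfolding A_def by auto
      then show "Poly_Mapping.lookup (restr {l} f) a * (\<Prod>i\<in>Poly_Mapping.keys a. (t * v i) ^ Poly_Mapping.lookup a i) =
         Poly_Mapping.lookup f a * x ^ Poly_Mapping.lookup a l"
        using prod_keys_single[of a l "\<lambda>i. t * v i"] t(2) by (simp add: lookup_restr)
    qed
    ultimately show ?thesis by simp
  qed
  have "P = 0"
  proof (rule ccontr)
    assume "P \<noteq> 0"
    then have "finite {x. poly P x = 0}" by (rule poly_roots_finite)
    moreover have "UNIV - {0} \<subseteq> {x. poly P x = 0}" using root by auto
    ultimately have "finite (UNIV - {0::'k})" by (rule finite_subset[rotated])
    then have "finite (UNIV::'k set)" by simp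
    then show False using infinite_UNIV_char_0 by blast
  qed
  then have "coeff P d = 0" by simp
  moreover have "coeff P d = (\<Sum>a\<in>A. if Poly_Mapping.lookup a l = d then Poly_Mapping.lookup f a else 0)"
    unfolding P_def coeff_sum coeff_monom by simp
  moreover have "(\<Sum>a\<in>A. if Poly_Mapping.lookup a l = d then Poly_Mapping.lookup f a else 0)
      = Poly_Mapping.lookup f (Poly_Mapping.single l d)"
  proof (cases "Poly_Mapping.single l d \<in> A")
    case True
    have "(\<Sum>a\<in>A. if Poly_Mapping.lookup a l = d then Poly_Mapping.lookup f a else 0)
        = (\<Sum>a\<in>{Poly_Mapping.single l d}. if Poly_Mapping.lookup a l = d then Poly_Mapping.lookup f a else 0)"
    proof (rule sum.mono_neutral_right[OF finA])
      show "{Poly_Mapping.single l d} \<subseteq> A" using True by simp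
      show "\<forall>a\<in>A - {Poly_Mapping.single l d}. (if Poly_Mapping.lookup a l = d then Poly_Mapping.lookup f a else 0) = 0"
      proof
        fix a assume a: "a \<in> A - {Poly_Mapping.single l d}"
        then have "a = Poly_Mapping.single l (Poly_Mapping.lookup a l)" using mono_single_l unfolding A_def by auto
        then show "(if Poly_Mapping.lookup a l = d then Poly_Mapping.lookup f a else 0) = 0" using a by auto
      qed
    qed
    then show ?thesis by simp
  next
    case False
    have "(\<Sum>a\<in>A. if Poly_Mapping.lookup a l = d then Poly_Mapping.lookup f a else 0) = 0"
    proof (rule sum.neutral, rule ballI)
      fix a assume a: "a \<in> A"
      then have "a = Poly_Mapping.single l (Poly_Mapping.lookup a l)" using mono_single_l unfolding A_def by auto
      then show "(if Poly_Mapping.lookup a l = d then Poly_Mapping.lookup f a else 0) = 0" using a False by auto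
    qed
    moreover have "Poly_Mapping.single l d \<notin> Poly_Mapping.keys f" using False unfolding A_def by (auto split: if_splits)
    ultimately show ?thesis by (simp add: in_keys_iff)
  qed
  ultimately show ?thesis by simp
qed


lemma noL:
  fixes f :: "'k::zero mpoly"
  assumes "\<forall>d. Poly_Mapping.lookup f (Poly_Mapping.single l d) = 0" "a \<in> Poly_Mapping.keys f" "Poly_Mapping.keys a \<subseteq> {l}"
  shows False
proof -
  have "a = Poly_Mapping.single l (Poly_Mapping.lookup a l)" using mono_single_l[OF assms(3)] .
  then have "Poly_Mapping.lookup f a = 0" using assms(1) by metis
  then show False using assms(2) by (simp add: in_keys_iff)
qed

lemma polyring_mono: "V \<subseteq> V' \<Longrightarrow> polyring V \<subseteq> polyring V'"
  unfolding polyring_def by auto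

lemma keys_le: "a = b + (c::mono) \<Longrightarrow> Poly_Mapping.keys b \<subseteq> Poly_Mapping.keys a"
  using keys_add_nat by auto

theorem lemma3p3:
  fixes Y Z :: "(nat \<Rightarrow> 'k::{alg_closed_field, field_char_0}) set"
    and n l m :: nat and ord :: "mono \<Rightarrow> mono \<Rightarrow> bool"
  assumes "0 < l" and "l < n"
    and "proj_closed n Y" and "proj_closed n Z"
    and "\<forall>v\<in>Y. \<forall>i<l. v i = 0"
    and "\<forall>v\<in>Z. \<forall>i\<in>{l+1..n}. v i = 0"
    and "Y \<inter> Z \<noteq> {}"
    and "monomial_order n ord"
    and "0 < m"
  shows "std_monos ord {0..n} (van_ideal n Y \<inter> van_ideal n Z) m
           = std_monos ord {l..n} (van_ideal n Y) m \<union> std_monos ord {0..l} (van_ideal n Z) m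
         \<and> std_monos ord {l..n} (van_ideal n Y) m \<inter> std_monos ord {0..l} (van_ideal n Z) m
           = {Poly_Mapping.single l m}"
proof -
  obtain v0 where v0: "v0 \<in> Y" "v0 \<in> Z" using assms(7) by blast
  obtain SY where "Y = {v\<in>cone_points n. \<forall>g\<in>SY. mpoly_eval g v = 0}"
    using assms(3) unfolding proj_closed_def by blast
  then have "v0 \<in> cone_points n" using v0 by auto
  then have cn: "\<forall>i>n. v0 i = 0" unfolding cone_points_def by blast
  have v0z: "\<forall>i. i \<noteq> l \<longrightarrow> v0 i = 0"
  proof (intro allI impI)
    fix i assume i: "i \<noteq> l"
    show "v0 i = 0"
    proof (cases "i < l")
      case True then show ?thesis using v0(1) assms(5) by blast
    next
      case False
      show ?thesis
      proof (cases "i \<le> n")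
        case True
        then have "i \<in> {l+1..n}" using False i by auto
        then show ?thesis using v0(2) assms(6) by blast
      next
        case False then show ?thesis using cn by simp
      qed
    qed
  qed
  have KY: "\<forall>d. Poly_Mapping.lookup f (Poly_Mapping.single l d) = 0" if "f \<in> van_ideal n Y" for f
    using Kpoint[OF assms(3) v0(1) v0z that] by blast
  have KZ: "\<forall>d. Poly_Mapping.lookup f (Poly_Mapping.single l d) = 0" if "f \<in> van_ideal n Z" for f
    using Kpoint[OF assms(4) v0(2) v0z that] by blast
  have F1: "f \<in> van_ideal n Z" if f: "f \<in> van_ideal n Y" "f \<in> polyring {l..n}" for f
  proof -
    have "\<forall>v\<in>Z. mpoly_eval f v = 0"
    proof
      fix v assume v: "v \<in> Z"
      show "mpoly_eval f v = 0"
      proof (rule eval_zero, rule ballI)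
        fix a assume a: "a \<in> Poly_Mapping.keys f"
        have "\<not> Poly_Mapping.keys a \<subseteq> {l}" using noL[OF KY[OF f(1)] a] by blast
        then obtain i where i: "i \<in> Poly_Mapping.keys a" "i \<noteq> l" by blast
        have "i \<in> {l..n}" using i(1) a f(2) unfolding polyring_def by blast
        then have "i \<in> {l+1..n}" using i(2) by auto
        then show "\<exists>i\<in>Poly_Mapping.keys a. v i = 0" using i(1) v assms(6) by blast
      qed
    qed
    then show ?thesis using f(1) unfolding van_ideal_def by blast
  qed
  have F2: "f \<in> van_ideal n Y" if f: "f \<in> van_ideal n Z" "f \<in> polyring {0..l}" for f
  proof -
    have "\<forall>v\<in>Y. mpoly_eval f v = 0"
    proof
      fix v assume v: "v \<in> Y"
      show "mpoly_eval f v = 0"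
      proof (rule eval_zero, rule ballI)
        fix a assume a: "a \<in> Poly_Mapping.keys f"
        have "\<not> Poly_Mapping.keys a \<subseteq> {l}" using noL[OF KZ[OF f(1)] a] by blast
        then obtain i where i: "i \<in> Poly_Mapping.keys a" "i \<noteq> l" by blast
        have "i \<in> {0..l}" using i(1) a f(2) unfolding polyring_def by blast
        then have "i < l" using i(2) by auto
        then show "\<exists>i\<in>Poly_Mapping.keys a. v i = 0" using i(1) v assms(5) by blast
      qed
    qed
    then show ?thesis using f(1) unfolding van_ideal_def by blast
  qed
  let ?IX = "van_ideal n Y \<inter> van_ideal n Z"
  let ?SX = "std_monos ord {0..n} ?IX m"
  let ?SY = "std_monos ord {l..n} (van_ideal n Y) m"
  let ?SZ = "std_monos ord {0..l} (van_ideal n Z) m"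
  have lnY: "l \<in> {l..n}" and lnZ: "l \<in> {0..l}" using assms(2) by auto
  have PY: "polyring {l..n} \<subseteq> polyring {0..n}" by (rule polyring_mono) auto
  have PZ: "polyring {0..l} \<subseteq> polyring {0..n}" by (rule polyring_mono) (use assms(2) in auto)
  have sub1: "?SX \<subseteq> ?SY \<union> ?SZ"
  proof
    fix a assume "a \<in> ?SX"
    then have a: "Poly_Mapping.keys a \<subseteq> {0..n}" "mdeg a = m"
      and nd: "\<not> (\<exists>f. (f \<in> ?IX \<inter> polyring {0..n} \<and> f \<noteq> 0) \<and> (\<exists>c. a = lead_mono ord f + c))"
      unfolding std_iff by blast+
    have notmixed: False if i: "i \<in> Poly_Mapping.keys a" "i < l" and j: "j \<in> Poly_Mapping.keys a" "l < j" for i j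
    proof -
      have jn: "j \<le> n" using j(1) a(1) by auto
      define b :: mono where "b = Poly_Mapping.single i 1 + Poly_Mapping.single j 1"
      define f :: "'k mpoly" where "f = Poly_Mapping.single b 1"
      have kb: "Poly_Mapping.keys b = {i, j}" unfolding b_def keys_add_nat by auto
      have kf: "Poly_Mapping.keys f = {b}" unfolding f_def by simp
      have fP: "f \<in> polyring {0..n}" using kf kb jn i(2) j(2) unfolding polyring_def by auto
      have fY: "f \<in> van_ideal n Y" unfolding van_ideal_def
        using fP kf kb assms(5) i(2) by (auto intro!: eval_zero)
      have fZ: "f \<in> van_ideal n Z" unfolding van_ideal_def
        using fP kf kb assms(6) j(2) jn by (auto intro!: eval_zero)
      have lf: "lead_mono ord f = b"
      proof (rule lead_eqI[OF assms(8) fP])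
        show "b \<in> Poly_Mapping.keys f" using kf by simp
        have "b \<in> {a::mono. Poly_Mapping.keys a \<subseteq> {0..n}}" using kb jn i(2) j(2) by auto
        then show "\<forall>c\<in>Poly_Mapping.keys f. ord c b" using kf mo_props(1)[OF assms(8)] by auto
      qed
      have "a = b + (a - b)"
      proof (rule poly_mapping_eqI)
        fix k
        have "Poly_Mapping.lookup b k \<le> Poly_Mapping.lookup a k"
          using i(1) j(1) i(2) j(2) unfolding b_def
          by (auto simp: lookup_add lookup_single in_keys_iff when_def Suc_leI)
        then show "Poly_Mapping.lookup a k = Poly_Mapping.lookup (b + (a - b)) k"
          by (simp add: lookup_add lookup_minus)
      qed
      moreover have "f \<noteq> 0" using kf by auto
      ultimately show False using nd fY fZ fP lf by blast
    qed
    show "a \<in> ?SY \<union> ?SZ"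
    proof (cases "\<exists>i\<in>Poly_Mapping.keys a. i < l")
      case False
      then have ka: "Poly_Mapping.keys a \<subseteq> {l..n}" using a(1) by force
      have "\<not> (\<exists>f. (f \<in> van_ideal n Y \<inter> polyring {l..n} \<and> f \<noteq> 0) \<and> (\<exists>c. a = lead_mono ord f + c))"
        using nd F1 PY by blast
      then have "a \<in> ?SY" unfolding std_iff using ka a(2) by blast
      then show ?thesis by blast
    next
      case True
      then obtain i where i: "i \<in> Poly_Mapping.keys a" "i < l" by blast
      have ka: "Poly_Mapping.keys a \<subseteq> {0..l}"
      proof
        fix j assume j: "j \<in> Poly_Mapping.keys a"
        have "\<not> l < j" using notmixed[OF i j] by blast
        then show "j \<in> {0..l}" by auto
      qed
      have "\<not> (\<exists>f. (f \<in> van_ideal n Z \<inter> polyring {0..l} \<and> f \<noteq> 0) \<and> (\<exists>c. a = lead_mono ord f + c))"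
        using nd F2 PZ by blast
      then have "a \<in> ?SZ" unfolding std_iff using ka a(2) by blast
      then show ?thesis by blast
    qed
  qed
  have sub2: "?SY \<subseteq> ?SX"
  proof
    fix a assume "a \<in> ?SY"
    then have a: "Poly_Mapping.keys a \<subseteq> {l..n}" "mdeg a = m"
      and nd: "\<not> (\<exists>f. (f \<in> van_ideal n Y \<inter> polyring {l..n} \<and> f \<noteq> 0) \<and> (\<exists>c. a = lead_mono ord f + c))"
      unfolding std_iff by blast+
    have "\<not> (\<exists>f. (f \<in> ?IX \<inter> polyring {0..n} \<and> f \<noteq> 0) \<and> (\<exists>c. a = lead_mono ord f + c))"
    proof
      assume "\<exists>f. (f \<in> ?IX \<inter> polyring {0..n} \<and> f \<noteq> 0) \<and> (\<exists>c. a = lead_mono ord f + c)"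
      then obtain f c where f: "f \<in> van_ideal n Y" "f \<in> polyring {0..n}" "f \<noteq> 0" and c: "a = lead_mono ord f + c"
        by blast
      have lp: "lead_mono ord f \<in> Poly_Mapping.keys f" "\<forall>b\<in>Poly_Mapping.keys f. ord b (lead_mono ord f)"
        using lead_props[OF assms(8) f(2,3)] by blast+
      define g where "g = restr {l..n} f"
      have kg: "Poly_Mapping.keys g = {b\<in>Poly_Mapping.keys f. Poly_Mapping.keys b \<subseteq> {l..n}}"
        unfolding g_def by (rule keys_restr)
      have gR: "g \<in> polyring {l..n}" unfolding polyring_def using kg by auto
      have "\<forall>v\<in>Y. mpoly_eval g v = 0"
      proof
        fix v assume v: "v \<in> Y"
        have "mpoly_eval f v = mpoly_eval g v" unfolding g_def
        proof (rule eval_restr, intro ballI impI)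
          fix b assume b: "b \<in> Poly_Mapping.keys f" "\<not> Poly_Mapping.keys b \<subseteq> {l..n}"
          then obtain i where i: "i \<in> Poly_Mapping.keys b" "i \<notin> {l..n}" by blast
          have "i \<in> {0..n}" using i(1) b(1) f(2) unfolding polyring_def by blast
          then have "i < l" using i(2) by auto
          then show "\<exists>i\<in>Poly_Mapping.keys b. v i = 0" using i(1) v assms(5) by blast
        qed
        then show "mpoly_eval g v = 0" using f(1) v unfolding van_ideal_def by simp
      qed
      then have gY: "g \<in> van_ideal n Y" using gR PY unfolding van_ideal_def by blast
      have "Poly_Mapping.keys (lead_mono ord f) \<subseteq> {l..n}" using keys_le[OF c] a(1) by blast
      then have lg: "lead_mono ord f \<in> Poly_Mapping.keys g" using kg lp(1) by blast
      then have g0: "g \<noteq> 0" by auto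
      have "lead_mono ord g = lead_mono ord f"
        by (rule lead_eqI[OF assms(8)]) (use gR PY lg kg lp(2) in auto)
      then have "(g \<in> van_ideal n Y \<inter> polyring {l..n} \<and> g \<noteq> 0) \<and> (\<exists>c. a = lead_mono ord g + c)"
        using gY gR g0 c by auto
      then show False using nd by blast
    qed
    then show "a \<in> ?SX" unfolding std_iff using a by auto
  qed
  have sub3: "?SZ \<subseteq> ?SX"
  proof
    fix a assume "a \<in> ?SZ"
    then have a: "Poly_Mapping.keys a \<subseteq> {0..l}" "mdeg a = m"
      and nd: "\<not> (\<exists>f. (f \<in> van_ideal n Z \<inter> polyring {0..l} \<and> f \<noteq> 0) \<and> (\<exists>c. a = lead_mono ord f + c))"
      unfolding std_iff by blast+
    have "\<not> (\<exists>f. (f \<in> ?IX \<inter> polyring {0..n} \<and> f \<noteq> 0) \<and> (\<exists>c. a = lead_mono ord f + c))"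
    proof
      assume "\<exists>f. (f \<in> ?IX \<inter> polyring {0..n} \<and> f \<noteq> 0) \<and> (\<exists>c. a = lead_mono ord f + c)"
      then obtain f c where f: "f \<in> van_ideal n Z" "f \<in> polyring {0..n}" "f \<noteq> 0" and c: "a = lead_mono ord f + c"
        by blast
      have lp: "lead_mono ord f \<in> Poly_Mapping.keys f" "\<forall>b\<in>Poly_Mapping.keys f. ord b (lead_mono ord f)"
        using lead_props[OF assms(8) f(2,3)] by blast+
      define g where "g = restr {0..l} f"
      have kg: "Poly_Mapping.keys g = {b\<in>Poly_Mapping.keys f. Poly_Mapping.keys b \<subseteq> {0..l}}"
        unfolding g_def by (rule keys_restr)
      have gR: "g \<in> polyring {0..l}" unfolding polyring_def using kg by auto
      have "\<forall>v\<in>Z. mpoly_eval g v = 0"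
      proof
        fix v assume v: "v \<in> Z"
        have "mpoly_eval f v = mpoly_eval g v" unfolding g_def
        proof (rule eval_restr, intro ballI impI)
          fix b assume b: "b \<in> Poly_Mapping.keys f" "\<not> Poly_Mapping.keys b \<subseteq> {0..l}"
          then obtain i where i: "i \<in> Poly_Mapping.keys b" "i \<notin> {0..l}" by blast
          have "i \<in> {0..n}" using i(1) b(1) f(2) unfolding polyring_def by blast
          then have "i \<in> {l+1..n}" using i(2) by auto
          then show "\<exists>i\<in>Poly_Mapping.keys b. v i = 0" using i(1) v assms(6) by blast
        qed
        then show "mpoly_eval g v = 0" using f(1) v unfolding van_ideal_def by simp
      qed
      then have gZ: "g \<in> van_ideal n Z" using gR PZ unfolding van_ideal_def by blast
      have "Poly_Mapping.keys (lead_mono ord f) \<subseteq> {0..l}" using keys_le[OF c] a(1) by blast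
      then have lg: "lead_mono ord f \<in> Poly_Mapping.keys g" using kg lp(1) by blast
      then have g0: "g \<noteq> 0" by auto
      have "lead_mono ord g = lead_mono ord f"
        by (rule lead_eqI[OF assms(8)]) (use gR PZ lg kg lp(2) in auto)
      then have "(g \<in> van_ideal n Z \<inter> polyring {0..l} \<and> g \<noteq> 0) \<and> (\<exists>c. a = lead_mono ord g + c)"
        using gZ gR g0 c by auto
      then show False using nd by blast
    qed
    moreover have "Poly_Mapping.keys a \<subseteq> {0..n}" using a(1) assms(2) by auto
    ultimately show "a \<in> ?SX" unfolding std_iff using a(2) by blast
  qed
  have int1: "?SY \<inter> ?SZ \<subseteq> {Poly_Mapping.single l m}"
  proof
    fix a assume "a \<in> ?SY \<inter> ?SZ"
    then have "Poly_Mapping.keys a \<subseteq> {l..n}" "Poly_Mapping.keys a \<subseteq> {0..l}" "mdeg a = m"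
      unfolding Int_iff std_iff by blast+
    then have ka: "Poly_Mapping.keys a \<subseteq> {l}" and md: "mdeg a = m" by fastforce+
    then have "Poly_Mapping.lookup a l = m" using mdeg_keys_single[OF ka] by simp
    then show "a \<in> {Poly_Mapping.single l m}" using mono_single_l[OF ka] by simp
  qed
  have km: "Poly_Mapping.keys (Poly_Mapping.single l m) = {l}" using assms(9) by simp
  have dm: "mdeg (Poly_Mapping.single l m) = m" using mdeg_keys_single[of "Poly_Mapping.single l m" l] km by simp
  have nodom: False if "\<forall>d. Poly_Mapping.lookup f (Poly_Mapping.single l d) = 0" "f \<in> polyring {0..n}" "f \<noteq> 0"
      "Poly_Mapping.single l m = lead_mono ord f + c" for f c
  proof -
    have "lead_mono ord f \<in> Poly_Mapping.keys f" using lead_props[OF assms(8) that(2,3)] by blast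
    moreover have "Poly_Mapping.keys (lead_mono ord f) \<subseteq> {l}" using keys_le[OF that(4)] km by blast
    ultimately show False using noL[OF that(1)] by blast
  qed
  have int2: "Poly_Mapping.single l m \<in> ?SY"
    unfolding std_iff
  proof (intro conjI notI)
    show "Poly_Mapping.keys (Poly_Mapping.single l m) \<subseteq> {l..n}" using km lnY by simp
    show "mdeg (Poly_Mapping.single l m) = m" by (rule dm)
    assume "\<exists>f. (f \<in> van_ideal n Y \<inter> polyring {l..n} \<and> f \<noteq> 0) \<and> (\<exists>c. Poly_Mapping.single l m = lead_mono ord f + c)"
    then obtain f c where f: "f \<in> van_ideal n Y" "f \<in> polyring {l..n}" "f \<noteq> 0" "Poly_Mapping.single l m = lead_mono ord f + c"
      by blast
    have "f \<in> polyring {0..n}" using f(2) PY by blast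
    then show False using nodom[OF KY[OF f(1)] _ f(3,4)] by blast
  qed
  have int3: "Poly_Mapping.single l m \<in> ?SZ"
    unfolding std_iff
  proof (intro conjI notI)
    show "Poly_Mapping.keys (Poly_Mapping.single l m) \<subseteq> {0..l}" using km lnZ by simp
    show "mdeg (Poly_Mapping.single l m) = m" by (rule dm)
    assume "\<exists>f. (f \<in> van_ideal n Z \<inter> polyring {0..l} \<and> f \<noteq> 0) \<and> (\<exists>c. Poly_Mapping.single l m = lead_mono ord f + c)"
    then obtain f c where f: "f \<in> van_ideal n Z" "f \<in> polyring {0..l}" "f \<noteq> 0" "Poly_Mapping.single l m = lead_mono ord f + c"
      by blast
    have "f \<in> polyring {0..n}" using f(2) PZ by blast
    then show False using nodom[OF KZ[OF f(1)] _ f(3,4)] by blast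
  qed
  show ?thesis using sub1 sub2 sub3 int1 int2 int3 by blast
qed

end
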